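(* Assume inhibitory coupling ($\varepsilon_{ij}\le0$ for all $i,j$ and $\varepsilon<0$). Assume the directed graph $G$ with an edge $j\to i$ exactly when $j\in\mathrm{Pre}(i)$ is strongly connected, and let $l_c\le N-1$ be its diameter. Let $\boldsymbol\delta(0)\in\mathbb R^N$, and define $\boldsymbol\delta(l)=A(\mathcal O_l)\boldsymbol\delta(l-1)$ for $l\ge1$. Here $\mathcal O_l$ is an ordering consistent with $\boldsymbol\delta(l-1)$: for each $i$, $\delta_{j_1(i)}(l-1)\ge\delta_{j_2(i)}(l-1)\ge\dots\ge\delta_{j_{k_i}(i)}(l-1)$. Then: 1. If all $\delta_i(0)\ge0$ and $\boldsymbol\delta(0)$ is not a multiple of $(1,\dots,1)^{\mathsf T}$, then $\max_i\delta_i(l)<\max_i\delta_i(0)$ for all $l\ge l_c$. 2. There is a constant $c\in\mathbb R$ such that $\boldsymbol\delta(l)\to c\,(1,\dots,1)^{\mathsf T}$ as $l\to\infty$; that is, the synchronous state is asymptotically stable (modulo uniform phase shifts).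
   Context: Let $U$ be a twice continuously differentiable, strictly increasing function on an interval $I\subseteq\mathbb R$ containing $(-\infty,1]$. Assume $U'>0$ and $U''<0$ on $I$, $U(0)=0$ and $U(1)=1$. Fix $N\ge 2$ and a delay $\tau\in(0,1)$. For each $i$ fix a nonempty set $\mathrm{Pre}(i)\subseteq\{1,\dots,N\}\setminus\{i\}$ and put $k_i=|\mathrm{Pre}(i)|$. Fix real couplings $\varepsilon_{ij}$ with $\varepsilon_{ij}\neq0$ if and only if $j\in\mathrm{Pre}(i)$, normalized so that $\sum_j\varepsilon_{ij}=\varepsilon$ for every $i$. An ordering $\mathcal O$ is a choice, for each $i$, of an enumeration $j_1(i),\dots,j_{k_i}(i)$ of $\mathrm{Pre}(i)$. For $n\in\{0,\dots,k_i\}$ define $$p_{i,n}=\frac{U'\Big(U^{-1}\big(U(\tau)+\sum_{m=1}^{n}\varepsilon_{ij_m(i)}\big)\Big)}{U'\big(U^{-1}(U(\tau)+\varepsilon)\big)}.$$ The stability matrix $A(\mathcal O)$ has entries - $A_{ii}=p_{i,0}$; - $A_{ij}=p_{i,n}-p_{i,n-1}$ if $j=j_n(i)$; - $A_{ij}=0$ if $j\notin\mathrm{Pre}(i)\cup\{i\}$. The diameter of a strongly connected digraph is the maximum over ordered pairs of vertices of the length of a shortest directed path between them. *)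

theory Defs
  imports "HOL-Analysis.Analysis"
begin

text \<open>Vertices are 0..N-1. An ordering is given as a function ord :: nat => nat list,
  where ord i is the enumeration j_1(i),...,j_{k_i}(i) of Pre(i) (0-indexed list).\<close>

definition valid_ordering :: "nat \<Rightarrow> (nat \<Rightarrow> nat set) \<Rightarrow> (nat \<Rightarrow> nat list) \<Rightarrow> bool" where
  "valid_ordering N Pre ord \<longleftrightarrow> (\<forall>i<N. distinct (ord i) \<and> set (ord i) = Pre i)"

text \<open>p_{i,n} of the paper; Uinv is the inverse of U on I, Ud is U'.\<close>
definition p_coef :: "(real \<Rightarrow> real) \<Rightarrow> real set \<Rightarrow> (real \<Rightarrow> real) \<Rightarrow> real \<Rightarrow> real
   \<Rightarrow> (nat \<Rightarrow> nat \<Rightarrow> real) \<Rightarrow> (nat \<Rightarrow> nat list) \<Rightarrow> nat \<Rightarrow> nat \<Rightarrow> real" where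
  "p_coef U I Ud \<tau> \<epsilon> eps ord i n =
     Ud (inv_into I U (U \<tau> + (\<Sum>m<n. eps i (ord i ! m)))) / Ud (inv_into I U (U \<tau> + \<epsilon>))"

definition stab_matrix :: "(real \<Rightarrow> real) \<Rightarrow> real set \<Rightarrow> (real \<Rightarrow> real) \<Rightarrow> real \<Rightarrow> real
   \<Rightarrow> (nat \<Rightarrow> nat \<Rightarrow> real) \<Rightarrow> (nat \<Rightarrow> nat list) \<Rightarrow> nat \<Rightarrow> nat \<Rightarrow> real" where
  "stab_matrix U I Ud \<tau> \<epsilon> eps ord i j =
     (if j = i then p_coef U I Ud \<tau> \<epsilon> eps ord i 0
      else if j \<in> set (ord i) then
        (let n = (LEAST n. n < length (ord i) \<and> ord i ! n = j) in
          p_coef U I Ud \<tau> \<epsilon> eps ord i (Suc n) - p_coef U I Ud \<tau> \<epsilon> eps ord i n)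
      else 0)"

definition has_path :: "nat \<Rightarrow> (nat \<Rightarrow> nat set) \<Rightarrow> nat \<Rightarrow> nat \<Rightarrow> nat \<Rightarrow> bool" where
  "has_path N Pre u v n \<longleftrightarrow> (\<exists>xs. length xs = Suc n \<and> hd xs = u \<and> last xs = v
       \<and> set xs \<subseteq> {..<N} \<and> (\<forall>k<n. xs ! k \<in> Pre (xs ! Suc k)))"

definition strongly_connected :: "nat \<Rightarrow> (nat \<Rightarrow> nat set) \<Rightarrow> bool" where
  "strongly_connected N Pre \<longleftrightarrow> (\<forall>u<N. \<forall>v<N. \<exists>n. has_path N Pre u v n)"

definition graph_dist :: "nat \<Rightarrow> (nat \<Rightarrow> nat set) \<Rightarrow> nat \<Rightarrow> nat \<Rightarrow> nat" where
  "graph_dist N Pre u v = (LEAST n. has_path N Pre u v n)"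

definition diameter :: "nat \<Rightarrow> (nat \<Rightarrow> nat set) \<Rightarrow> nat" where
  "diameter N Pre = Max {graph_dist N Pre u v | u v. u < N \<and> v < N}"

end

theory Submission
  imports Defs
begin


lemma U_analysis:
  fixes U Ud Udd :: "real \<Rightarrow> real" and I :: "real set" and \<tau> :: real
  assumes I_int: "is_interval I" and I_sup: "{..1} \<subseteq> I"
    and U_deriv: "\<And>x. x \<in> I \<Longrightarrow> (U has_real_derivative Ud x) (at x within I)"
    and Ud_deriv: "\<And>x. x \<in> I \<Longrightarrow> (Ud has_real_derivative Udd x) (at x within I)"
    and Ud_pos: "\<And>x. x \<in> I \<Longrightarrow> Ud x > 0"
    and Udd_neg: "\<And>x. x \<in> I \<Longrightarrow> Udd x < 0"
    and U0: "U 0 = 0" and tau: "0 < \<tau>" "\<tau> < 1"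
  shows "(\<forall>x y. x \<in> I \<longrightarrow> y \<in> I \<longrightarrow> x < y \<longrightarrow> U x < U y)
    \<and> (\<forall>x y. x < y \<longrightarrow> y < 1 \<longrightarrow> Ud y < Ud x)
    \<and> (\<forall>t. t \<le> U \<tau> \<longrightarrow> (\<exists>x. x \<le> \<tau> \<and> U x = t))"
proof -
  have contU: "continuous_on I U"
    using U_deriv DERIV_continuous continuous_on_eq_continuous_within by blast
  have low: "\<And>x. x < 1 \<Longrightarrow> (U has_real_derivative Ud x) (at x)"
    "\<And>x. x < 1 \<Longrightarrow> (Ud has_real_derivative Udd x) (at x)"
    "\<And>x. x < 1 \<Longrightarrow> x \<in> I"
  proof -
    fix x :: real assume x: "x < 1"
    have xI: "x \<in> I" using x I_sup by auto
    have e: "at x within I = at x"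
      by (rule at_within_open_subset[of x "{..<1}"]) (use x I_sup in auto)
    show "(U has_real_derivative Ud x) (at x)" using U_deriv[OF xI] e by simp
    show "(Ud has_real_derivative Udd x) (at x)" using Ud_deriv[OF xI] e by simp
    show "x \<in> I" by fact
  qed
  have mono: "\<forall>x y. x \<in> I \<longrightarrow> y \<in> I \<longrightarrow> x < y \<longrightarrow> U x < U y"
  proof (intro allI impI)
    fix x y assume xI: "x \<in> I" and yI: "y \<in> I" and xy: "x < y"
    have sub: "{x..y} \<subseteq> I"
    proof
      fix z assume "z \<in> {x..y}"
      then have "x \<le> z" "z \<le> y" by auto
      then show "z \<in> I" using I_int xI yI unfolding is_interval_1 by blast
    qed
    show "U x < U y"
    proof (rule DERIV_pos_imp_increasing_open[OF xy])
      fix z assume z: "x < z" "z < y"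
      have zI: "z \<in> I" using z sub by auto
      have e: "at z within I = at z"
      proof (rule at_within_open_subset[of z "{x<..<y}"])
        show "z \<in> {x<..<y}" using z by simp
        show "open {x<..<y}" by simp
        show "{x<..<y} \<subseteq> I" using sub by auto
      qed
      show "\<exists>d. (U has_real_derivative d) (at z) \<and> d > 0"
        using U_deriv[OF zI] Ud_pos[OF zI] unfolding e by blast
    next
      show "continuous_on {x..y} U" using continuous_on_subset[OF contU sub] .
    qed
  qed
  have anti: "\<forall>x y. x < y \<longrightarrow> y < 1 \<longrightarrow> Ud y < Ud x"
  proof (intro allI impI)
    fix x y :: real assume xy: "x < y" and y1: "y < 1"
    show "Ud y < Ud x"
    proof (rule DERIV_neg_imp_decreasing[OF xy])
      fix z assume z: "x \<le> z" "z \<le> y"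
      then have z1: "z < 1" using y1 by simp
      show "\<exists>d. (Ud has_real_derivative d) (at z) \<and> d < 0"
        using low(2)[OF z1] Udd_neg[OF low(3)[OF z1]] by blast
    qed
  qed
  have onto: "\<forall>t. t \<le> U \<tau> \<longrightarrow> (\<exists>x. x \<le> \<tau> \<and> U x = t)"
  proof (intro allI impI)
    fix t assume t: "t \<le> U \<tau>"
    define a where "a = min 0 (t / Ud 0)"
    have Ud0: "Ud 0 > 0" using Ud_pos low(3)[of 0] by simp
    have a0: "a \<le> 0" unfolding a_def by simp
    have Ua: "U a \<le> t"
    proof (cases "a = 0")
      case True
      then have "t / Ud 0 \<ge> 0" unfolding a_def by (simp add: min_def split: if_splits)
      then have "t \<ge> 0" using Ud0 by (simp add: zero_le_divide_iff)
      then show ?thesis using True U0 by simp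
    next
      case False
      then have aneg: "a < 0" and aeq: "a = t / Ud 0" using a0 unfolding a_def by (auto simp: min_def split: if_splits)
      have dd: "\<And>x. a \<le> x \<Longrightarrow> x \<le> 0 \<Longrightarrow> (U has_real_derivative Ud x) (at x)"
        using low(1) by simp
      obtain z where z: "a < z" "z < 0" "U 0 - U a = (0 - a) * Ud z"
        using MVT2[OF aneg dd] by blast
      have "Ud 0 < Ud z" using anti z by auto
      then have "(0 - a) * Ud 0 \<le> (0 - a) * Ud z" using aneg by (intro mult_left_mono) auto
      moreover have "(0 - a) * Ud 0 = - t" using aeq Ud0 by simp
      ultimately show ?thesis using z U0 by linarith
    qed
    have "\<exists>x. a \<le> x \<and> x \<le> \<tau> \<and> U x = t"
    proof (rule IVT')
      show "U a \<le> t" by fact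
      show "t \<le> U \<tau>" by fact
      show "a \<le> \<tau>" using a0 tau by simp
      show "continuous_on {a..\<tau>} U"
        by (rule continuous_on_subset[OF contU]) (use low(3) tau in auto)
    qed
    then show "\<exists>x. x \<le> \<tau> \<and> U x = t" by blast
  qed
  show ?thesis using mono anti onto by blast
qed



lemma g_props:
  fixes U Ud :: "real \<Rightarrow> real" and I :: "real set" and \<tau> :: real
  assumes mono: "\<forall>x y. x \<in> I \<longrightarrow> y \<in> I \<longrightarrow> x < y \<longrightarrow> U x < U y"
    and anti: "\<forall>x y. x < y \<longrightarrow> y < 1 \<longrightarrow> Ud y < Ud x"
    and onto: "\<forall>t. t \<le> U \<tau> \<longrightarrow> (\<exists>x. x \<le> \<tau> \<and> U x = t)"
    and I_sup: "{..1} \<subseteq> I" and Ud_pos: "\<And>x. x \<in> I \<Longrightarrow> Ud x > 0"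
    and tau: "\<tau> < 1"
  shows "\<And>s. s \<le> 0 \<Longrightarrow> Ud (inv_into I U (U \<tau> + s)) > 0"
    and "\<And>s s'. s' < s \<Longrightarrow> s \<le> 0 \<Longrightarrow> Ud (inv_into I U (U \<tau> + s)) < Ud (inv_into I U (U \<tau> + s'))"
proof -
  have inj: "inj_on U I"
  proof (rule inj_onI)
    fix x y assume "x \<in> I" "y \<in> I" "U x = U y"
    then show "x = y" using mono by (metis less_irrefl linorder_neqE_linordered_idom)
  qed
  have h: "inv_into I U (U \<tau> + s) \<le> \<tau> \<and> inv_into I U (U \<tau> + s) \<in> I \<and> U (inv_into I U (U \<tau> + s)) = U \<tau> + s"
    if s: "s \<le> 0" for s
  proof -
    obtain x where x: "x \<le> \<tau>" "U x = U \<tau> + s" using onto s by (metis add_le_same_cancel1)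
    have xI: "x \<in> I" using x tau I_sup by auto
    have "inv_into I U (U \<tau> + s) = x" using inv_into_f_f[OF inj xI] x(2) by simp
    then show ?thesis using x xI by simp
  qed
  show "\<And>s. s \<le> 0 \<Longrightarrow> Ud (inv_into I U (U \<tau> + s)) > 0" using h Ud_pos by blast
  show "Ud (inv_into I U (U \<tau> + s)) < Ud (inv_into I U (U \<tau> + s'))" if ss: "s' < s" "s \<le> 0" for s s'
  proof -
    have hs: "inv_into I U (U \<tau> + s) \<le> \<tau> \<and> inv_into I U (U \<tau> + s) \<in> I \<and> U (inv_into I U (U \<tau> + s)) = U \<tau> + s"
      using h ss by simp
    have hs': "inv_into I U (U \<tau> + s') \<le> \<tau> \<and> inv_into I U (U \<tau> + s') \<in> I \<and> U (inv_into I U (U \<tau> + s')) = U \<tau> + s'"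
      using h ss by simp
    have lt: "inv_into I U (U \<tau> + s') < inv_into I U (U \<tau> + s)"
    proof (rule ccontr)
      assume "\<not> ?thesis"
      then have "inv_into I U (U \<tau> + s) \<le> inv_into I U (U \<tau> + s')" by simp
      then have "U (inv_into I U (U \<tau> + s)) \<le> U (inv_into I U (U \<tau> + s'))"
        using mono hs hs' by (metis order_le_less order_refl)
      then show False using hs hs' ss by simp
    qed
    show ?thesis using anti lt hs tau by simp
  qed
qed

lemma stab_props:
  fixes U Ud :: "real \<Rightarrow> real" and I :: "real set" and \<tau> \<epsilon> :: real
    and eps :: "nat \<Rightarrow> nat \<Rightarrow> real" and ord :: "nat \<Rightarrow> nat list"
  assumes gpos: "\<And>s. s \<le> 0 \<Longrightarrow> Ud (inv_into I U (U \<tau> + s)) > 0"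
    and gdec: "\<And>s s'. s' < s \<Longrightarrow> s \<le> 0 \<Longrightarrow> Ud (inv_into I U (U \<tau> + s)) < Ud (inv_into I U (U \<tau> + s'))"
    and iN: "i < N"
    and Pre_sub: "Pre i \<subseteq> {..<N} - {i}"
    and eps_supp: "\<And>j. j < N \<Longrightarrow> (eps i j \<noteq> 0 \<longleftrightarrow> j \<in> Pre i)"
    and eps_sum: "(\<Sum>j<N. eps i j) = \<epsilon>"
    and inhib: "\<And>j. j < N \<Longrightarrow> eps i j \<le> 0" and eps_neg: "\<epsilon> < 0"
    and dist: "distinct (ord i)" and setO: "set (ord i) = Pre i"
  shows "\<And>j. j < N \<Longrightarrow> 0 \<le> stab_matrix U I Ud \<tau> \<epsilon> eps ord i j"
    and "\<And>j. j \<in> insert i (Pre i) \<Longrightarrow> 0 < stab_matrix U I Ud \<tau> \<epsilon> eps ord i j"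
    and "(\<Sum>j<N. stab_matrix U I Ud \<tau> \<epsilon> eps ord i j) = 1"
proof -
  define xs where "xs = ord i"
  define g where "g = (\<lambda>s. Ud (inv_into I U (U \<tau> + s)))"
  define S where "S = (\<lambda>n. \<Sum>m<n. eps i (xs ! m))"
  define P where "P = (\<lambda>n. g (S n) / g \<epsilon>)"
  have Pdef: "\<And>n. p_coef U I Ud \<tau> \<epsilon> eps ord i n = P n"
    unfolding p_coef_def P_def g_def S_def xs_def by simp
  have xsN: "\<And>n. n < length xs \<Longrightarrow> xs ! n < N \<and> xs ! n \<noteq> i \<and> eps i (xs ! n) < 0"
  proof -
    fix n assume n: "n < length xs"
    have m: "xs ! n \<in> Pre i" using n setO unfolding xs_def by (metis nth_mem)
    have a: "xs ! n < N" "xs ! n \<noteq> i" using m Pre_sub by auto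
    have "eps i (xs ! n) \<noteq> 0" using eps_supp[OF a(1)] m by simp
    moreover have "eps i (xs ! n) \<le> 0" using inhib[OF a(1)] .
    ultimately show "xs ! n < N \<and> xs ! n \<noteq> i \<and> eps i (xs ! n) < 0"
      using a by simp
  qed
  have Sle: "S n \<le> 0" if "n \<le> length xs" for n
    unfolding S_def
  proof (rule sum_nonpos)
    fix m assume "m \<in> {..<n}"
    then have "m < length xs" using that by simp
    then show "eps i (xs ! m) \<le> 0" using xsN by (simp add: less_imp_le)
  qed
  have Sdec: "S (Suc n) < S n" if "n < length xs" for n
    unfolding S_def using xsN[OF that] by simp
  have bij: "bij_betw ((!) xs) {..<length xs} (Pre i)"
    by (rule bij_betw_nth) (use dist setO in \<open>auto simp: xs_def\<close>)
  have Slen: "S (length xs) = \<epsilon>"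
  proof -
    have "S (length xs) = (\<Sum>j\<in>Pre i. eps i j)"
      unfolding S_def using sum.reindex_bij_betw[OF bij, of "eps i"] by simp
    also have "\<dots> = (\<Sum>j<N. eps i j)"
      by (rule sum.mono_neutral_left) (use Pre_sub eps_supp in auto)
    finally show ?thesis using eps_sum by simp
  qed
  have ge: "g \<epsilon> > 0" using gpos eps_neg unfolding g_def by simp
  have Ppos: "P n > 0" if "n \<le> length xs" for n
    unfolding P_def using gpos[OF Sle[OF that]] ge unfolding g_def by simp
  have Pinc: "P (Suc n) - P n > 0" if "n < length xs" for n
  proof -
    have "g (S n) < g (S (Suc n))" unfolding g_def
      by (rule gdec) (use Sdec[OF that] Sle that in auto)
    then show ?thesis unfolding P_def using ge by (simp add: divide_strict_right_mono)
  qed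
  have idx: "stab_matrix U I Ud \<tau> \<epsilon> eps ord i (xs ! n) = P (Suc n) - P n" if n: "n < length xs" for n
  proof -
    have ne: "xs ! n \<noteq> i" using xsN[OF n] by simp
    have mem: "xs ! n \<in> set xs" using n by simp
    have L: "(LEAST m. m < length xs \<and> xs ! m = xs ! n) = n"
    proof (rule Least_equality)
      show "n < length xs \<and> xs ! n = xs ! n" using n by simp
      fix y assume y: "y < length xs \<and> xs ! y = xs ! n"
      have dxs: "distinct xs" using dist unfolding xs_def .
      have "y = n" using nth_eq_iff_index_eq[OF dxs] y n by blast
      then show "n \<le> y" by simp
    qed
    show ?thesis unfolding stab_matrix_def using ne mem L Pdef by (simp add: xs_def Let_def)
  qed
  have diag: "stab_matrix U I Ud \<tau> \<epsilon> eps ord i i = P 0"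
    unfolding stab_matrix_def using Pdef by simp
  have zero: "stab_matrix U I Ud \<tau> \<epsilon> eps ord i j = 0" if "j \<noteq> i" "j \<notin> Pre i" for j
    unfolding stab_matrix_def using that setO by simp
  have onPre: "j \<in> Pre i \<Longrightarrow> \<exists>n<length xs. j = xs ! n" for j
    using setO unfolding xs_def by (metis in_set_conv_nth)
  show "0 < stab_matrix U I Ud \<tau> \<epsilon> eps ord i j" if jin: "j \<in> insert i (Pre i)" for j
  proof (cases "j = i")
    case True then show ?thesis using diag Ppos by simp
  next
    case False
    then obtain n where "n < length xs" "j = xs ! n" using jin onPre by auto
    then show ?thesis using idx Pinc by simp
  qed
  note pos = this
  show "0 \<le> stab_matrix U I Ud \<tau> \<epsilon> eps ord i j" if "j < N" for j
  proof (cases "j \<in> insert i (Pre i)")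
    case True then show ?thesis using pos[OF True] by simp
  next
    case False then show ?thesis using zero by simp
  qed
  have "(\<Sum>j<N. stab_matrix U I Ud \<tau> \<epsilon> eps ord i j) = (\<Sum>j\<in>insert i (Pre i). stab_matrix U I Ud \<tau> \<epsilon> eps ord i j)"
    by (rule sum.mono_neutral_right) (use iN Pre_sub zero in auto)
  also have "\<dots> = P 0 + (\<Sum>j\<in>Pre i. stab_matrix U I Ud \<tau> \<epsilon> eps ord i j)"
    using Pre_sub diag finite_subset[of "Pre i" "{..<N}"] by (subst sum.insert) auto
  also have "(\<Sum>j\<in>Pre i. stab_matrix U I Ud \<tau> \<epsilon> eps ord i j) = (\<Sum>n<length xs. P (Suc n) - P n)"
    using sum.reindex_bij_betw[OF bij, of "stab_matrix U I Ud \<tau> \<epsilon> eps ord i"] idx by simp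
  also have "\<dots> = P (length xs) - P 0" by (rule sum_lessThan_telescope)
  also have "P (length xs) = 1" unfolding P_def Slen using ge by simp
  finally show "(\<Sum>j<N. stab_matrix U I Ud \<tau> \<epsilon> eps ord i j) = 1" by simp
qed



lemma has_path_ends:
  assumes "has_path N Pre v i n" shows "v < N \<and> i < N"
proof -
  obtain xs where xs: "length xs = Suc n" "hd xs = v" "last xs = i" "set xs \<subseteq> {..<N}"
    using assms unfolding has_path_def by blast
  have ne: "xs \<noteq> []" using xs(1) by auto
  have "hd xs \<in> set xs" "last xs \<in> set xs" using ne by auto
  then show ?thesis using xs by auto
qed

lemma has_path_0:
  assumes "has_path N Pre v i 0" shows "v = i"
proof -
  obtain xs where xs: "length xs = Suc 0" "hd xs = v" "last xs = i"
    using assms unfolding has_path_def by blast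
  then obtain a where "xs = [a]" by (cases xs) auto
  then show ?thesis using xs by simp
qed

lemma has_path_Suc:
  assumes "has_path N Pre v i (Suc n)"
  shows "\<exists>j. j \<in> Pre i \<and> has_path N Pre v j n"
proof -
  obtain xs where xs: "length xs = Suc (Suc n)" "hd xs = v" "last xs = i" "set xs \<subseteq> {..<N}"
    "\<forall>k<Suc n. xs ! k \<in> Pre (xs ! Suc k)"
    using assms unfolding has_path_def by blast
  define ys where "ys = take (Suc n) xs"
  have lys: "length ys = Suc n" using xs(1) unfolding ys_def by simp
  have "hd ys = v" unfolding ys_def using xs(1,2) by (simp add: hd_take)
  moreover have "last ys = xs ! n"
  proof -
    have ne: "ys \<noteq> []" using lys by auto
    have "last ys = ys ! (length ys - 1)" by (rule last_conv_nth[OF ne])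
    then have "last ys = ys ! n" using lys by simp
    moreover have "ys ! n = xs ! n" unfolding ys_def by (simp add: nth_take)
    ultimately show ?thesis by (rule trans)
  qed
  moreover have "set ys \<subseteq> {..<N}" unfolding ys_def using order_trans[OF set_take_subset xs(4)] .
  moreover have "\<forall>k<n. ys ! k \<in> Pre (ys ! Suc k)"
  proof (intro allI impI)
    fix k assume k: "k < n"
    have "ys ! k = xs ! k" "ys ! Suc k = xs ! Suc k" unfolding ys_def using k by simp_all
    moreover have "xs ! k \<in> Pre (xs ! Suc k)" using xs(5) k by simp
    ultimately show "ys ! k \<in> Pre (ys ! Suc k)" by simp
  qed
  ultimately have "has_path N Pre v (xs ! n) n" unfolding has_path_def using lys by blast
  moreover have "xs ! n \<in> Pre i"
  proof -
    have nx: "xs \<noteq> []" using xs(1) by auto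
    have "last xs = xs ! (length xs - 1)" by (rule last_conv_nth[OF nx])
    then have "xs ! Suc n = i" using xs(1,3) by simp
    moreover have "xs ! n \<in> Pre (xs ! Suc n)" using xs(5) by simp
    ultimately show ?thesis by simp
  qed
  ultimately show ?thesis by blast
qed

lemma dist_facts:
  assumes sc: "strongly_connected N Pre" and u: "u < N" and v: "v < N"
  shows "has_path N Pre u v (graph_dist N Pre u v)" and "graph_dist N Pre u v \<le> diameter N Pre"
proof -
  obtain n where "has_path N Pre u v n" using sc u v unfolding strongly_connected_def by blast
  then show "has_path N Pre u v (graph_dist N Pre u v)" unfolding graph_dist_def by (rule LeastI)
  have fin: "finite {graph_dist N Pre u v | u v. u < N \<and> v < N}"
    by (rule finite_image_set2) auto
  show "graph_dist N Pre u v \<le> diameter N Pre" unfolding diameter_def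
    by (rule Max_ge[OF fin]) (use u v in blast)
qed

lemma conv_low:
  fixes w x :: "nat \<Rightarrow> real"
  assumes "\<And>k. k < N \<Longrightarrow> 0 \<le> w k" "(\<Sum>k<N. w k) = 1" "\<And>k. k < N \<Longrightarrow> b \<le> x k" "j < N"
  shows "w j * (x j - b) \<le> (\<Sum>k<N. w k * x k) - b"
proof -
  have "(\<Sum>k<N. w k * (x k - b)) = (\<Sum>k<N. w k * x k) - (\<Sum>k<N. w k) * b"
    by (simp add: right_diff_distrib sum_subtractf sum_distrib_right)
  also have "\<dots> = (\<Sum>k<N. w k * x k) - b" using assms(2) by simp
  finally have e: "(\<Sum>k<N. w k * (x k - b)) = (\<Sum>k<N. w k * x k) - b" .
  have "w j * (x j - b) \<le> (\<Sum>k<N. w k * (x k - b))"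
    by (rule member_le_sum) (use assms in auto)
  then show ?thesis using e by simp
qed

lemma conv_up:
  fixes w x :: "nat \<Rightarrow> real"
  assumes "\<And>k. k < N \<Longrightarrow> 0 \<le> w k" "(\<Sum>k<N. w k) = 1" "\<And>k. k < N \<Longrightarrow> x k \<le> b" "j < N"
  shows "w j * (b - x j) \<le> b - (\<Sum>k<N. w k * x k)"
proof -
  have "w j * ((- x j) - (- b)) \<le> (\<Sum>k<N. w k * (- x k)) - (- b)"
    by (rule conv_low) (use assms in auto)
  then show ?thesis by (simp add: sum_negf)
qed


lemma dynamics:
  fixes a :: "nat \<Rightarrow> nat \<Rightarrow> nat \<Rightarrow> real" and \<delta> :: "nat \<Rightarrow> nat \<Rightarrow> real" and \<gamma> :: real
  assumes N0: "0 < N"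
    and Pre_sub: "\<And>i. i < N \<Longrightarrow> Pre i \<subseteq> {..<N} - {i}"
    and sc: "strongly_connected N Pre"
    and g0: "0 < \<gamma>"
    and anonneg: "\<And>l i j. 1 \<le> l \<Longrightarrow> i < N \<Longrightarrow> j < N \<Longrightarrow> 0 \<le> a l i j"
    and asum: "\<And>l i. 1 \<le> l \<Longrightarrow> i < N \<Longrightarrow> (\<Sum>j<N. a l i j) = 1"
    and adiag: "\<And>l i. 1 \<le> l \<Longrightarrow> i < N \<Longrightarrow> \<gamma> \<le> a l i i"
    and apre: "\<And>l i j. 1 \<le> l \<Longrightarrow> i < N \<Longrightarrow> j \<in> Pre i \<Longrightarrow> \<gamma> \<le> a l i j"
    and step: "\<And>l i. 1 \<le> l \<Longrightarrow> i < N \<Longrightarrow> \<delta> l i = (\<Sum>j<N. a l i j * \<delta> (l - 1) j)"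
  shows "((\<forall>i<N. \<delta> 0 i \<ge> 0) \<and> \<not> (\<exists>c. \<forall>i<N. \<delta> 0 i = c) \<longrightarrow>
            (\<forall>l \<ge> diameter N Pre. Max ((\<delta> l) ` {..<N}) < Max ((\<delta> 0) ` {..<N})))
         \<and> (\<exists>c::real. \<forall>i<N. (\<lambda>l. \<delta> l i) \<longlonglongrightarrow> c)"
proof -
  define M where "M = (\<lambda>l. Max ((\<delta> l) ` {..<N}))"
  define m where "m = (\<lambda>l. Min ((\<delta> l) ` {..<N}))"
  have fin: "finite ((\<delta> l) ` {..<N})" for l by simp
  have ne: "(\<delta> l) ` {..<N} \<noteq> {}" for l using N0 by auto
  have Mge: "\<delta> l i \<le> M l" if "i < N" for l i
    unfolding M_def by (rule Max_ge[OF fin]) (use that in simp)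
  have mle: "m l \<le> \<delta> l i" if "i < N" for l i
    unfolding m_def by (rule Min_le[OF fin]) (use that in simp)
  have Mex: "\<exists>i<N. \<delta> l i = M l" for l
  proof -
    have "M l \<in> (\<delta> l) ` {..<N}" unfolding M_def by (rule Max_in[OF fin ne])
    then show ?thesis by auto
  qed
  have mex: "\<exists>i<N. \<delta> l i = m l" for l
  proof -
    have "m l \<in> (\<delta> l) ` {..<N}" unfolding m_def by (rule Min_in[OF fin ne])
    then show ?thesis by auto
  qed
  have lowstep: "a (Suc l) i j * (\<delta> l j - b) \<le> \<delta> (Suc l) i - b"
    if "i < N" "j < N" "\<And>k. k < N \<Longrightarrow> b \<le> \<delta> l k" for l i j b
  proof -
    have "a (Suc l) i j * (\<delta> l j - b) \<le> (\<Sum>k<N. a (Suc l) i k * \<delta> l k) - b"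
      by (rule conv_low[of N "a (Suc l) i" b "\<delta> l" j]) (use anonneg asum that in auto)
    then show ?thesis using step[of "Suc l" i] that by simp
  qed
  have upstep: "a (Suc l) i j * (b - \<delta> l j) \<le> b - \<delta> (Suc l) i"
    if "i < N" "j < N" "\<And>k. k < N \<Longrightarrow> \<delta> l k \<le> b" for l i j b
  proof -
    have "a (Suc l) i j * (b - \<delta> l j) \<le> b - (\<Sum>k<N. a (Suc l) i k * \<delta> l k)"
      by (rule conv_up[of N "a (Suc l) i" "\<delta> l" b j]) (use anonneg asum that in auto)
    then show ?thesis using step[of "Suc l" i] that by simp
  qed
  have Mbound: "\<delta> (Suc l) i \<le> M l" if i: "i < N" for l i
  proof -
    have "a (Suc l) i i * (M l - \<delta> l i) \<le> M l - \<delta> (Suc l) i"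
      by (rule upstep) (use i Mge in auto)
    moreover have "0 \<le> a (Suc l) i i * (M l - \<delta> l i)"
      using anonneg[of "Suc l" i i] i Mge[OF i, of l] by simp
    ultimately show ?thesis by linarith
  qed
  have mbound: "m l \<le> \<delta> (Suc l) i" if i: "i < N" for l i
  proof -
    have "a (Suc l) i i * (\<delta> l i - m l) \<le> \<delta> (Suc l) i - m l"
      by (rule lowstep) (use i mle in auto)
    moreover have "0 \<le> a (Suc l) i i * (\<delta> l i - m l)"
      using anonneg[of "Suc l" i i] i mle[OF i, of l] by simp
    ultimately show ?thesis by linarith
  qed
  have Mdec: "M (Suc l) \<le> M l" for l
    using Mex[of "Suc l"] Mbound by metis
  have minc: "m l \<le> m (Suc l)" for l
    using mex[of "Suc l"] mbound by metis
  have Mdecseq: "decseq M" by (rule decseq_SucI) (rule Mdec)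
  have mincseq: "incseq m" by (rule incseq_SucI) (rule minc)
  have Mle: "M l \<le> M l'" if "l' \<le> l" for l l' using decseqD[OF Mdecseq that] .
  have mge: "m l' \<le> m l" if "l' \<le> l" for l l' using incseqD[OF mincseq that] .
  have part1: "(\<forall>i<N. \<delta> 0 i \<ge> 0) \<and> \<not> (\<exists>c. \<forall>i<N. \<delta> 0 i = c) \<longrightarrow>
            (\<forall>l \<ge> diameter N Pre. M l < M 0)"
  proof (intro impI allI)
    fix l assume nc: "(\<forall>i<N. \<delta> 0 i \<ge> 0) \<and> \<not> (\<exists>c. \<forall>i<N. \<delta> 0 i = c)" and ld: "diameter N Pre \<le> l"
    have key: "\<forall>i. i < N \<longrightarrow> \<delta> l i = M 0 \<longrightarrow> (\<forall>v n. n \<le> l \<longrightarrow> has_path N Pre v i n \<longrightarrow> \<delta> 0 v = M 0)" for l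
    proof (induction l)
      case 0
      show ?case using has_path_0 by fastforce
    next
      case (Suc l)
      show ?case
      proof (intro allI impI)
        fix i v n assume i: "i < N" and di: "\<delta> (Suc l) i = M 0" and n: "n \<le> Suc l"
          and p: "has_path N Pre v i n"
        have ub: "\<And>k. k < N \<Longrightarrow> \<delta> l k \<le> M 0" using Mge Mle by (meson order_trans zero_le)
        have sat: "\<delta> l j = M 0" if j: "j < N" "j = i \<or> j \<in> Pre i" for j
        proof -
          have "a (Suc l) i j * (M 0 - \<delta> l j) \<le> M 0 - \<delta> (Suc l) i"
            by (rule upstep) (use i j ub in auto)
          then have le0: "a (Suc l) i j * (M 0 - \<delta> l j) \<le> 0" using di by simp
          have apos: "a (Suc l) i j > 0"
            using adiag[of "Suc l" i] apre[of "Suc l" i j] g0 j i by auto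
          have "M 0 - \<delta> l j \<ge> 0" using ub[OF j(1)] by simp
          then have "a (Suc l) i j * (M 0 - \<delta> l j) \<ge> 0" using apos by simp
          then have "a (Suc l) i j * (M 0 - \<delta> l j) = 0" using le0 by linarith
          then show ?thesis using apos by simp
        qed
        show "\<delta> 0 v = M 0"
        proof (cases "n \<le> l")
          case True
          then show ?thesis using Suc.IH sat[of i] i p by blast
        next
          case False
          then have nS: "n = Suc l" using n by simp
          obtain j where j: "j \<in> Pre i" "has_path N Pre v j l" using has_path_Suc p nS by blast
          have jN: "j < N" using Pre_sub[OF i] j(1) by auto
          show ?thesis using Suc.IH sat[of j] jN j by blast
        qed
      qed
    qed
    show "M l < M 0"
    proof (rule ccontr)
      assume "\<not> M l < M 0"
      then have eq: "M l = M 0" using Mle[of 0 l] by simp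
      obtain i where i: "i < N" "\<delta> l i = M 0" using Mex[of l] eq by auto
      obtain u where u: "u < N" "\<delta> 0 u \<noteq> M 0" using nc by blast
      have p: "has_path N Pre u i (graph_dist N Pre u i)" and gd: "graph_dist N Pre u i \<le> diameter N Pre"
        using dist_facts[OF sc u(1) i(1)] by auto
      have gl: "graph_dist N Pre u i \<le> l" using gd ld by linarith
      have "\<delta> 0 u = M 0" using key[of l, rule_format, OF i(1) i(2) gl p] .
      then show False using u by simp
    qed
  qed
  have part2: "\<exists>c::real. \<forall>i<N. (\<lambda>l. \<delta> l i) \<longlonglongrightarrow> c"
  proof -
    have g1: "\<gamma> \<le> 1"
    proof -
      have "a 1 0 0 \<le> (\<Sum>j<N. a 1 0 j)"
        by (rule member_le_sum) (use N0 anonneg in auto)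
      then show ?thesis using adiag[of 1 0] asum[of 1 0] N0 by simp
    qed
    have reach: "\<forall>l0 i v n. n \<le> s \<longrightarrow> has_path N Pre v i n \<longrightarrow>
                    \<gamma> ^ s * (\<delta> l0 v - m l0) \<le> \<delta> (l0 + s) i - m l0" for s
    proof (induction s)
      case 0
      show ?case
      proof (intro allI impI)
        fix l0 i v n assume "n \<le> (0::nat)" "has_path N Pre v i n"
        then have "v = i" using has_path_0 by auto
        then show "\<gamma> ^ 0 * (\<delta> l0 v - m l0) \<le> \<delta> (l0 + 0) i - m l0" by simp
      qed
    next
      case (Suc s)
      show ?case
      proof (intro allI impI)
        fix l0 i v n assume n: "n \<le> Suc s" and p: "has_path N Pre v i n"
        have vi: "v < N" "i < N" using has_path_ends[OF p] by auto
        have lb: "\<And>k. k < N \<Longrightarrow> m l0 \<le> \<delta> (l0 + s) k"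
        proof -
          fix k assume k: "k < N"
          have "m l0 \<le> m (l0 + s)" by (rule mge) simp
          also have "\<dots> \<le> \<delta> (l0 + s) k" by (rule mle[OF k])
          finally show "m l0 \<le> \<delta> (l0 + s) k" .
        qed
        have X0: "0 \<le> \<delta> l0 v - m l0" using mle[OF vi(1)] by simp
        have gs0: "0 \<le> \<gamma> ^ s" using g0 by simp
        have e: "l0 + Suc s = Suc (l0 + s)" by simp
        obtain j where j: "j < N" "j = i \<or> j \<in> Pre i"
          and IHj: "\<gamma> ^ s * (\<delta> l0 v - m l0) \<le> \<delta> (l0 + s) j - m l0"
        proof (cases "n \<le> s")
          case True
          then show ?thesis using that[of i] Suc.IH p vi by blast
        next
          case False
          then have nS: "n = Suc s" using n by simp
          obtain j where j: "j \<in> Pre i" "has_path N Pre v j s" using has_path_Suc p nS by blast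
          have jN: "j < N" using Pre_sub[OF vi(2)] j(1) by auto
          show ?thesis using that[of j] jN j Suc.IH by blast
        qed
        have st: "a (Suc (l0 + s)) i j * (\<delta> (l0 + s) j - m l0) \<le> \<delta> (Suc (l0 + s)) i - m l0"
          by (rule lowstep) (use vi j lb in auto)
        have aj: "\<gamma> \<le> a (Suc (l0 + s)) i j"
          using adiag[of "Suc (l0 + s)" i] apre[of "Suc (l0 + s)" i j] j vi by auto
        have d0: "0 \<le> \<delta> (l0 + s) j - m l0" using lb[OF j(1)] by simp
        have "\<gamma> ^ Suc s * (\<delta> l0 v - m l0) = \<gamma> * (\<gamma> ^ s * (\<delta> l0 v - m l0))" by simp
        also have "\<dots> \<le> \<gamma> * (\<delta> (l0 + s) j - m l0)"
          by (rule mult_left_mono[OF IHj]) (use g0 in simp)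
        also have "\<dots> \<le> a (Suc (l0 + s)) i j * (\<delta> (l0 + s) j - m l0)"
          by (rule mult_right_mono[OF aj d0])
        also have "\<dots> \<le> \<delta> (l0 + Suc s) i - m l0" using st e by simp
        finally show "\<gamma> ^ Suc s * (\<delta> l0 v - m l0) \<le> \<delta> (l0 + Suc s) i - m l0" .
      qed
    qed
    define L where "L = diameter N Pre"
    define q where "q = 1 - \<gamma> ^ L"
    define D where "D = (\<lambda>l. M l - m l)"
    have gL: "0 < \<gamma> ^ L" using g0 by simp
    have gL1: "\<gamma> ^ L \<le> 1" using g0 g1 by (simp add: power_le_one)
    have q0: "0 \<le> q" and q1: "q < 1" unfolding q_def using gL gL1 by auto
    have Dnn: "0 \<le> D l" for l
      using mle[OF N0, of l] Mge[OF N0, of l] unfolding D_def by simp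
    have Danti: "D l \<le> D l'" if "l' \<le> l" for l l'
      using Mle[OF that] mge[OF that] unfolding D_def by simp
    have contr: "D (l0 + L) \<le> q * D l0" for l0
    proof -
      obtain v where v: "v < N" "\<delta> l0 v = M l0" using Mex by blast
      have lowb: "m l0 + \<gamma> ^ L * (M l0 - m l0) \<le> \<delta> (l0 + L) i" if i: "i < N" for i
      proof -
        have p: "has_path N Pre v i (graph_dist N Pre v i)" and gd: "graph_dist N Pre v i \<le> L"
          using dist_facts[OF sc v(1) i] unfolding L_def by auto
        have "\<gamma> ^ L * (\<delta> l0 v - m l0) \<le> \<delta> (l0 + L) i - m l0"
          using reach[of L, rule_format, OF gd p] .
        then show ?thesis using v by simp
      qed
      obtain i where i: "i < N" "\<delta> (l0 + L) i = m (l0 + L)" using mex by blast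
      have "m l0 + \<gamma> ^ L * (M l0 - m l0) \<le> m (l0 + L)" using lowb[OF i(1)] i(2) by simp
      moreover have "M (l0 + L) \<le> M l0" by (rule Mle) simp
      ultimately show ?thesis unfolding D_def q_def by (simp add: algebra_simps)
    qed
    have Dk: "D (k * L) \<le> q ^ k * D 0" for k
    proof (induction k)
      case 0 then show ?case by simp
    next
      case (Suc k)
      have "D (Suc k * L) = D (k * L + L)" by (simp add: add.commute)
      also have "\<dots> \<le> q * D (k * L)" by (rule contr)
      also have "\<dots> \<le> q * (q ^ k * D 0)" by (rule mult_left_mono[OF Suc.IH q0])
      finally show ?case by simp
    qed
    have Dlim: "D \<longlonglongrightarrow> 0"
      unfolding LIMSEQ_iff
    proof (intro allI impI)
      fix r :: real assume r: "0 < r"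
      have "0 < r / (D 0 + 1)" using r Dnn[of 0] by simp
      then obtain k where k: "q ^ k < r / (D 0 + 1)" using real_arch_pow_inv q1 by blast
      have "q ^ k * (D 0 + 1) < r" using k Dnn[of 0] by (simp add: pos_less_divide_eq)
      moreover have "q ^ k * D 0 \<le> q ^ k * (D 0 + 1)"
        by (rule mult_left_mono) (use q0 in simp_all)
      ultimately have kr: "q ^ k * D 0 < r" by linarith
      show "\<exists>no. \<forall>n\<ge>no. norm (D n - 0) < r"
      proof (intro exI allI impI)
        fix n assume "k * L \<le> n"
        then have "D n \<le> D (k * L)" by (rule Danti)
        then have "D n < r" using Dk[of k] kr by linarith
        then show "norm (D n - 0) < r" using Dnn[of n] by simp
      qed
    qed
    have bdd: "bdd_below (range M)"
    proof (rule bdd_belowI[of _ "m 0"])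
      fix x assume "x \<in> range M"
      then obtain l where l: "x = M l" by auto
      have "m 0 \<le> m l" by (rule mge) simp
      also have "\<dots> \<le> \<delta> l 0" by (rule mle[OF N0])
      also have "\<dots> \<le> M l" by (rule Mge[OF N0])
      finally show "m 0 \<le> x" using l by simp
    qed
    define c where "c = (INF l. M l)"
    have Mlim: "M \<longlonglongrightarrow> c" unfolding c_def by (rule LIMSEQ_decseq_INF[OF bdd Mdecseq])
    have mlim: "m \<longlonglongrightarrow> c"
    proof -
      have "(\<lambda>l. M l - D l) \<longlonglongrightarrow> c - 0" by (rule tendsto_diff[OF Mlim Dlim])
      then show ?thesis unfolding D_def by simp
    qed
    have "\<forall>i<N. (\<lambda>l. \<delta> l i) \<longlonglongrightarrow> c"
    proof (intro allI impI)
      fix i assume i: "i < N"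
      show "(\<lambda>l. \<delta> l i) \<longlonglongrightarrow> c"
      proof (rule tendsto_sandwich[OF _ _ mlim Mlim])
        show "\<forall>\<^sub>F l in sequentially. m l \<le> \<delta> l i" using mle[OF i] by simp
        show "\<forall>\<^sub>F l in sequentially. \<delta> l i \<le> M l" using Mge[OF i] by simp
      qed
    qed
    then show ?thesis by blast
  qed
  show ?thesis using part1 part2 unfolding M_def by blast
qed

lemma stab_cong: "stab_matrix U I Ud \<tau> \<epsilon> eps ord i j = stab_matrix U I Ud \<tau> \<epsilon> eps (\<lambda>_. ord i) i j"
  unfolding stab_matrix_def p_coef_def by simp

theorem mainTheorem7:
  fixes U Ud Udd :: "real \<Rightarrow> real" and I :: "real set"
    and N :: nat and \<tau> \<epsilon> :: real and Pre :: "nat \<Rightarrow> nat set"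
    and eps :: "nat \<Rightarrow> nat \<Rightarrow> real"
    and \<delta> :: "nat \<Rightarrow> nat \<Rightarrow> real" and Ord :: "nat \<Rightarrow> nat \<Rightarrow> nat list"
  assumes I_int: "is_interval I" and I_sup: "{..1} \<subseteq> I"
    and U_deriv: "\<And>x. x \<in> I \<Longrightarrow> (U has_real_derivative Ud x) (at x within I)"
    and Ud_deriv: "\<And>x. x \<in> I \<Longrightarrow> (Ud has_real_derivative Udd x) (at x within I)"
    and Udd_cont: "continuous_on I Udd"
    and Ud_pos: "\<And>x. x \<in> I \<Longrightarrow> Ud x > 0"
    and Udd_neg: "\<And>x. x \<in> I \<Longrightarrow> Udd x < 0"
    and U0: "U 0 = 0" and U1: "U 1 = 1"
    and N2: "N \<ge> 2"
    and tau: "0 < \<tau>" "\<tau> < 1"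
    and Pre_sub: "\<And>i. i < N \<Longrightarrow> Pre i \<subseteq> {..<N} - {i}"
    and Pre_ne: "\<And>i. i < N \<Longrightarrow> Pre i \<noteq> {}"
    and eps_supp: "\<And>i j. i < N \<Longrightarrow> j < N \<Longrightarrow> (eps i j \<noteq> 0 \<longleftrightarrow> j \<in> Pre i)"
    and eps_sum: "\<And>i. i < N \<Longrightarrow> (\<Sum>j<N. eps i j) = \<epsilon>"
    and inhib: "\<And>i j. i < N \<Longrightarrow> j < N \<Longrightarrow> eps i j \<le> 0" and eps_neg: "\<epsilon> < 0"
    and sc: "strongly_connected N Pre"
    and O_valid: "\<And>l. l \<ge> 1 \<Longrightarrow> valid_ordering N Pre (Ord l)"
    and O_consistent: "\<And>l i. l \<ge> 1 \<Longrightarrow> i < N \<Longrightarrow>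
          sorted_wrt (\<lambda>a b. \<delta> (l - 1) a \<ge> \<delta> (l - 1) b) (Ord l i)"
    and \<delta>_step: "\<And>l i. l \<ge> 1 \<Longrightarrow> i < N \<Longrightarrow>
          \<delta> l i = (\<Sum>j<N. stab_matrix U I Ud \<tau> \<epsilon> eps (Ord l) i j * \<delta> (l - 1) j)"
  shows "((\<forall>i<N. \<delta> 0 i \<ge> 0) \<and> \<not> (\<exists>c. \<forall>i<N. \<delta> 0 i = c) \<longrightarrow>
            (\<forall>l \<ge> diameter N Pre. Max ((\<delta> l) ` {..<N}) < Max ((\<delta> 0) ` {..<N})))
         \<and> (\<exists>c::real. \<forall>i<N. (\<lambda>l. \<delta> l i) \<longlonglongrightarrow> c)"
proof -
  have an: "(\<forall>x y. x \<in> I \<longrightarrow> y \<in> I \<longrightarrow> x < y \<longrightarrow> U x < U y)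
    \<and> (\<forall>x y. x < y \<longrightarrow> y < 1 \<longrightarrow> Ud y < Ud x)
    \<and> (\<forall>t. t \<le> U \<tau> \<longrightarrow> (\<exists>x. x \<le> \<tau> \<and> U x = t))"
    by (rule U_analysis[OF I_int I_sup U_deriv Ud_deriv Ud_pos Udd_neg U0 tau])
  then have mono: "\<forall>x y. x \<in> I \<longrightarrow> y \<in> I \<longrightarrow> x < y \<longrightarrow> U x < U y"
    and anti: "\<forall>x y. x < y \<longrightarrow> y < 1 \<longrightarrow> Ud y < Ud x"
    and onto: "\<forall>t. t \<le> U \<tau> \<longrightarrow> (\<exists>x. x \<le> \<tau> \<and> U x = t)" by auto
  have gpos: "\<And>s. s \<le> 0 \<Longrightarrow> Ud (inv_into I U (U \<tau> + s)) > 0"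
    using g_props(1)[where U=U and Ud=Ud and I=I and \<tau>=\<tau>, OF mono anti onto I_sup Ud_pos tau(2)] .
  have gdec: "\<And>s s'. s' < s \<Longrightarrow> s \<le> 0 \<Longrightarrow> Ud (inv_into I U (U \<tau> + s)) < Ud (inv_into I U (U \<tau> + s'))"
    using g_props(2)[where U=U and Ud=Ud and I=I and \<tau>=\<tau>, OF mono anti onto I_sup Ud_pos tau(2)] .
  have spx: "(\<forall>j<N. 0 \<le> stab_matrix U I Ud \<tau> \<epsilon> eps ord i j)
     \<and> (\<forall>j \<in> insert i (Pre i). 0 < stab_matrix U I Ud \<tau> \<epsilon> eps ord i j)
     \<and> (\<Sum>j<N. stab_matrix U I Ud \<tau> \<epsilon> eps ord i j) = 1"
    if i: "i < N" and d: "distinct (ord i)" and s: "set (ord i) = Pre i" for i ord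
  proof -
    have h: "\<And>j. j < N \<Longrightarrow> (eps i j \<noteq> 0 \<longleftrightarrow> j \<in> Pre i)" using eps_supp i by blast
    have h2: "\<And>j. j < N \<Longrightarrow> eps i j \<le> 0" using inhib i by blast
    note q = stab_props[where U=U and Ud=Ud and I=I and \<tau>=\<tau> and i=i and N=N and Pre=Pre and eps=eps and \<epsilon>=\<epsilon> and ord=ord,
      OF gpos gdec i Pre_sub[OF i] h eps_sum[OF i] h2 eps_neg d s]
    show ?thesis using q by blast
  qed
  define V where "V = {stab_matrix U I Ud \<tau> \<epsilon> eps (\<lambda>_. xs) i j | xs i j.
      i < N \<and> (j = i \<or> j \<in> Pre i) \<and> distinct xs \<and> set xs = Pre i}"
  have Vsub: "V \<subseteq> (\<lambda>(xs, i, j). stab_matrix U I Ud \<tau> \<epsilon> eps (\<lambda>_. xs) i j) `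
      ({xs. set xs \<subseteq> {..<N} \<and> length xs \<le> N} \<times> {..<N} \<times> {..<N})"
  proof
    fix x assume "x \<in> V"
    then obtain xs i j where x: "x = stab_matrix U I Ud \<tau> \<epsilon> eps (\<lambda>_. xs) i j"
      and i: "i < N" and j: "j = i \<or> j \<in> Pre i" and d: "distinct xs" and s: "set xs = Pre i"
      unfolding V_def by blast
    have ss: "set xs \<subseteq> {..<N}" using s Pre_sub[OF i] by auto
    have "length xs = card (set xs)" using distinct_card[OF d] by simp
    also have "\<dots> \<le> card {..<N::nat}" by (rule card_mono[OF _ ss]) simp
    finally have len: "length xs \<le> N" by simp
    have jN: "j < N" using j i Pre_sub[OF i] by auto
    show "x \<in> (\<lambda>(xs, i, j). stab_matrix U I Ud \<tau> \<epsilon> eps (\<lambda>_. xs) i j) `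
      ({xs. set xs \<subseteq> {..<N} \<and> length xs \<le> N} \<times> {..<N} \<times> {..<N})"
      using x ss len i jN by (intro image_eqI[of _ _ "(xs, i, j)"]) auto
  qed
  have finV: "finite V"
    by (rule finite_subset[OF Vsub]) (intro finite_imageI finite_cartesian_product finite_lists_length_le; simp)
  have Vpos: "0 < x" if xV: "x \<in> V" for x
  proof -
    obtain xs i j where x: "x = stab_matrix U I Ud \<tau> \<epsilon> eps (\<lambda>_. xs) i j"
      and i: "i < N" and j: "j = i \<or> j \<in> Pre i" and d: "distinct xs" and s: "set xs = Pre i"
      using xV unfolding V_def by blast
    have dd: "distinct ((\<lambda>_. xs) i)" and ss: "set ((\<lambda>_. xs) i) = Pre i" using d s by simp_all
    have "\<forall>j \<in> insert i (Pre i). 0 < stab_matrix U I Ud \<tau> \<epsilon> eps (\<lambda>_. xs) i j"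
      using spx[of i "\<lambda>_. xs", OF i dd ss] by blast
    then show ?thesis using x j by auto
  qed
  define \<gamma> where "\<gamma> = Min (insert 1 V)"
  have g0: "0 < \<gamma>"
  proof -
    have "\<gamma> \<in> insert 1 V" unfolding \<gamma>_def by (rule Min_in) (use finV in auto)
    then show ?thesis using Vpos by auto
  qed
  have gle: "\<gamma> \<le> x" if "x \<in> V" for x
    unfolding \<gamma>_def by (rule Min_le) (use finV that in auto)
  have valid: "distinct (Ord l i) \<and> set (Ord l i) = Pre i" if "1 \<le> l" "i < N" for l i
    using O_valid[OF that(1)] that(2) unfolding valid_ordering_def by blast
  have inV: "stab_matrix U I Ud \<tau> \<epsilon> eps (Ord l) i j \<in> V"
    if "1 \<le> l" "i < N" "j = i \<or> j \<in> Pre i" for l i j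
  proof -
    have "stab_matrix U I Ud \<tau> \<epsilon> eps (Ord l) i j = stab_matrix U I Ud \<tau> \<epsilon> eps (\<lambda>_. Ord l i) i j"
      by (rule stab_cong)
    moreover have "distinct (Ord l i)" "set (Ord l i) = Pre i" using valid[OF that(1,2)] by auto
    ultimately show ?thesis unfolding V_def using that(2,3) by blast
  qed
  show ?thesis
  proof (rule dynamics[where a = "\<lambda>l. stab_matrix U I Ud \<tau> \<epsilon> eps (Ord l)" and \<gamma> = \<gamma>])
    show "0 < N" using N2 by simp
    show "\<And>i. i < N \<Longrightarrow> Pre i \<subseteq> {..<N} - {i}" by (rule Pre_sub)
    show "strongly_connected N Pre" by (rule sc)
    show "0 < \<gamma>" by (rule g0)
    have sx: "(\<forall>j<N. 0 \<le> stab_matrix U I Ud \<tau> \<epsilon> eps (Ord l) i j)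
     \<and> (\<forall>j \<in> insert i (Pre i). 0 < stab_matrix U I Ud \<tau> \<epsilon> eps (Ord l) i j)
     \<and> (\<Sum>j<N. stab_matrix U I Ud \<tau> \<epsilon> eps (Ord l) i j) = 1" if l: "1 \<le> l" and i: "i < N" for l i
    proof -
      have dd: "distinct (Ord l i)" and ss: "set (Ord l i) = Pre i" using valid[OF l i] by auto
      show ?thesis using spx[of i "Ord l", OF i dd ss] .
    qed
    show "\<And>l i j. 1 \<le> l \<Longrightarrow> i < N \<Longrightarrow> j < N \<Longrightarrow> 0 \<le> stab_matrix U I Ud \<tau> \<epsilon> eps (Ord l) i j"
      using sx by blast
    show "\<And>l i. 1 \<le> l \<Longrightarrow> i < N \<Longrightarrow> (\<Sum>j<N. stab_matrix U I Ud \<tau> \<epsilon> eps (Ord l) i j) = 1"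
      using sx by blast
    show "\<And>l i. 1 \<le> l \<Longrightarrow> i < N \<Longrightarrow> \<gamma> \<le> stab_matrix U I Ud \<tau> \<epsilon> eps (Ord l) i i"
    proof -
      fix l i :: nat assume l: "1 \<le> l" and i: "i < N"
      show "\<gamma> \<le> stab_matrix U I Ud \<tau> \<epsilon> eps (Ord l) i i" by (rule gle[OF inV[OF l i]]) simp
    qed
    show "\<And>l i j. 1 \<le> l \<Longrightarrow> i < N \<Longrightarrow> j \<in> Pre i \<Longrightarrow> \<gamma> \<le> stab_matrix U I Ud \<tau> \<epsilon> eps (Ord l) i j"
    proof -
      fix l i j :: nat assume l: "1 \<le> l" and i: "i < N" and j: "j \<in> Pre i"
      show "\<gamma> \<le> stab_matrix U I Ud \<tau> \<epsilon> eps (Ord l) i j" by (rule gle[OF inV[OF l i]]) (use j in simp)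
    qed
    show "\<And>l i. 1 \<le> l \<Longrightarrow> i < N \<Longrightarrow> \<delta> l i = (\<Sum>j<N. stab_matrix U I Ud \<tau> \<epsilon> eps (Ord l) i j * \<delta> (l - 1) j)"
      by (rule \<delta>_step)
  qed
qed

end
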